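(* (Working in $\mathbf{ZF}$.) Every weakly Hausdorff topologically compact generalized topological space is weakly normal.
   Context: A generalized topological space (gts) $(X,\mathrm{Op}_X,\mathrm{Cov}_X)$ is in the sense of Delfs–Knebusch: $\mathrm{Op}_X\subseteq\mathcal P(X)$ contains $\emptyset,X$ and is closed under finite unions and intersections, $\mathrm{Cov}_X$ is a collection of subfamilies of $\mathrm{Op}_X$ (admissible coverings) satisfying the Delfs–Knebusch axioms (finite families are admissible; unions of admissible families are open; admissible families restrict to open subsets of their union, are stable under admissible refinement and under coarsening with the same union; and a set whose traces on all members of an admissible family are open is open). $\mathrm{Cl}_X=\{X\setminus U:U\in\mathrm{Op}_X\}$. The topologization $X_{top}$ is $X$ with the topology generated by $\mathrm{Op}_X$. The gts is topologically compact if $X_{top}$ is compact, and weakly Hausdorff if $X_{top}$ is Hausdorff. It is weakly normal if for every disjoint $A_1,A_2\subseteq X$, each of which is a singleton or a member of $\mathrm{Cl}_X$, there exist disjoint $W_1,W_2\in\mathrm{Op}_X$ with $A_i\subseteq W_i$ ($i=1,2$). *)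

theory Defs
  imports "HOL-Analysis.Analysis"
begin

text \<open>Generalized topological spaces in the sense of Delfs--Knebusch.
  A gts is given by its carrier X, its family of open sets Op and its
  family of admissible coverings Cov.\<close>

definition gts :: "'a set \<Rightarrow> 'a set set \<Rightarrow> 'a set set set \<Rightarrow> bool" where
  "gts X Op Cov \<longleftrightarrow>
     Op \<subseteq> Pow X \<and> {} \<in> Op \<and> X \<in> Op \<and>
     (\<forall>U\<in>Op. \<forall>V\<in>Op. U \<union> V \<in> Op \<and> U \<inter> V \<in> Op) \<and>
     Cov \<subseteq> Pow Op \<and>
     \<comment> \<open>finite families of open sets are admissible\<close>
     (\<forall>F. finite F \<and> F \<subseteq> Op \<longrightarrow> F \<in> Cov) \<and>
     \<comment> \<open>the union of an admissible family is open\<close>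
     (\<forall>F\<in>Cov. \<Union>F \<in> Op) \<and>
     \<comment> \<open>restriction to an open subset of the union\<close>
     (\<forall>F\<in>Cov. \<forall>V\<in>Op. V \<subseteq> \<Union>F \<longrightarrow> (\<lambda>U. U \<inter> V) ` F \<in> Cov) \<and>
     \<comment> \<open>stability under admissible refinement\<close>
     (\<forall>F\<in>Cov. \<forall>G. (\<forall>U\<in>F. G U \<in> Cov \<and> \<Union>(G U) = U) \<longrightarrow> (\<Union>U\<in>F. G U) \<in> Cov) \<and>
     \<comment> \<open>coarsening with the same union\<close>
     (\<forall>F\<in>Cov. \<forall>G. G \<subseteq> Op \<and> \<Union>G = \<Union>F \<and> (\<forall>U\<in>F. \<exists>W\<in>G. U \<subseteq> W) \<longrightarrow> G \<in> Cov) \<and>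
     \<comment> \<open>locality of openness\<close>
     (\<forall>F\<in>Cov. \<forall>V. V \<subseteq> \<Union>F \<and> (\<forall>U\<in>F. V \<inter> U \<in> Op) \<longrightarrow> V \<in> Op)"

definition gts_Cl :: "'a set \<Rightarrow> 'a set set \<Rightarrow> 'a set set" where
  "gts_Cl X Op = {X - U | U. U \<in> Op}"

definition gts_top :: "'a set set \<Rightarrow> 'a topology" where
  "gts_top Op = topology_generated_by Op"

definition topologically_compact :: "'a set \<Rightarrow> 'a set set \<Rightarrow> 'a set set set \<Rightarrow> bool" where
  "topologically_compact X Op Cov \<longleftrightarrow> compact_space (gts_top Op)"

definition weakly_Hausdorff :: "'a set \<Rightarrow> 'a set set \<Rightarrow> 'a set set set \<Rightarrow> bool" where
  "weakly_Hausdorff X Op Cov \<longleftrightarrow> Hausdorff_space (gts_top Op)"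

definition weakly_normal :: "'a set \<Rightarrow> 'a set set \<Rightarrow> 'a set set set \<Rightarrow> bool" where
  "weakly_normal X Op Cov \<longleftrightarrow>
     (\<forall>A1 A2. A1 \<subseteq> X \<and> A2 \<subseteq> X \<and> A1 \<inter> A2 = {} \<and>
        ((\<exists>x. A1 = {x}) \<or> A1 \<in> gts_Cl X Op) \<and>
        ((\<exists>x. A2 = {x}) \<or> A2 \<in> gts_Cl X Op) \<longrightarrow>
        (\<exists>W1\<in>Op. \<exists>W2\<in>Op. W1 \<inter> W2 = {} \<and> A1 \<subseteq> W1 \<and> A2 \<subseteq> W2))"

end

theory Submission
  imports Defs
begin

lemma gts_D:
  assumes "gts X Op Cov"
  shows "Op \<subseteq> Pow X" "X \<in> Op" "\<forall>U\<in>Op. \<forall>V\<in>Op. U \<union> V \<in> Op \<and> U \<inter> V \<in> Op"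
    "\<forall>F. finite F \<and> F \<subseteq> Op \<longrightarrow> F \<in> Cov" "\<forall>F\<in>Cov. \<Union>F \<in> Op"
  using assms unfolding gts_def apply -
  apply (elim conjE, assumption)+
  done

lemma gts_basis:
  assumes g: "gts X Op Cov" and o: "openin (gts_top Op) U" and x: "x \<in> U"
  shows "\<exists>B\<in>Op. x \<in> B \<and> B \<subseteq> U"
proof -
  have gen: "generate_topology_on Op U" using o unfolding gts_top_def
    by (rule openin_topology_generated_by)
  have int: "\<forall>U\<in>Op. \<forall>V\<in>Op. U \<inter> V \<in> Op" using gts_D(3)[OF g] by blast
  from gen x show ?thesis
  proof (induction arbitrary: x)
    case Empty then show ?case by simp
  next
    case (Int a b)
    then obtain A B where "A\<in>Op" "x\<in>A" "A\<subseteq>a" "B\<in>Op" "x\<in>B" "B\<subseteq>b" by blast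
    then show ?case using int by (intro bexI[of _ "A \<inter> B"]) auto
  next
    case (UN K)
    then obtain k where "k\<in>K" "x\<in>k" by blast
    with UN.IH[of k x] show ?case by blast
  next
    case (Basis s) then show ?case by blast
  qed
qed

lemma gts_top_space:
  assumes g: "gts X Op Cov" shows "topspace (gts_top Op) = X"
proof -
  have "\<Union>Op = X" using gts_D(1,2)[OF g] by blast
  then show ?thesis unfolding gts_top_def by simp
qed

lemma gts_shrink:
  assumes g: "gts X Op Cov" and c: "compactin (gts_top Op) A"
    and o: "openin (gts_top Op) U" and s: "A \<subseteq> U"
  shows "\<exists>W\<in>Op. A \<subseteq> W \<and> W \<subseteq> U"
proof -
  let ?C = "{B\<in>Op. B \<subseteq> U}"
  have "\<forall>B\<in>?C. openin (gts_top Op) B"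
    unfolding gts_top_def openin_topology_generated_by_iff
    by (auto intro: generate_topology_on.Basis)
  moreover have "A \<subseteq> \<Union>?C" using s gts_basis[OF g o] by blast
  ultimately obtain F where F: "finite F" "F \<subseteq> ?C" "A \<subseteq> \<Union>F"
    using c unfolding compactin_def by (elim conjE allE[of _ ?C]) blast
  have "F \<in> Cov" using gts_D(4)[OF g] F by blast
  hence "\<Union>F \<in> Op" using gts_D(5)[OF g] by blast
  then show ?thesis using F by blast
qed

theorem proposition3p15:
  fixes X :: "'a set" and Op :: "'a set set" and Cov :: "'a set set set"
  assumes "gts X Op Cov"
    and "weakly_Hausdorff X Op Cov"
    and "topologically_compact X Op Cov"
  shows "weakly_normal X Op Cov"
proof -
  let ?T = "gts_top Op"
  have H: "Hausdorff_space ?T" using assms(2) unfolding weakly_Hausdorff_def .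
  have C: "compact_space ?T" using assms(3) unfolding topologically_compact_def .
  have N: "normal_space ?T" using H C compact_Hausdorff_or_regular_imp_normal_space by blast
  have ts: "topspace ?T = X" using gts_top_space[OF assms(1)] .
  have cl: "closedin ?T A" if hA: "A \<subseteq> X" "(\<exists>x. A = {x}) \<or> A \<in> gts_Cl X Op" for A
  proof (cases "\<exists>x. A = {x}")
    case True
    then obtain x where "A = {x}" by blast
    moreover have "x \<in> topspace ?T" using hA ts \<open>A = {x}\<close> by simp
    moreover have "t1_space ?T" using H by (rule Hausdorff_imp_t1_space)
    ultimately show ?thesis by (simp add: t1_space_closedin_singleton)
  next
    case False
    then obtain U where U: "U \<in> Op" "A = X - U" using hA unfolding gts_Cl_def by blast
    have "openin ?T U" unfolding gts_top_def openin_topology_generated_by_iff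
      using U by (auto intro: generate_topology_on.Basis)
    then have "closedin ?T (topspace ?T - U)" by (intro closedin_diff closedin_topspace)
    then show ?thesis using U ts by simp
  qed
  show ?thesis unfolding weakly_normal_def
  proof (intro allI impI)
    fix A1 A2 assume a: "A1 \<subseteq> X \<and> A2 \<subseteq> X \<and> A1 \<inter> A2 = {} \<and>
        ((\<exists>x. A1 = {x}) \<or> A1 \<in> gts_Cl X Op) \<and> ((\<exists>x. A2 = {x}) \<or> A2 \<in> gts_Cl X Op)"
    have c1: "closedin ?T A1" by (rule cl) (use a in blast)+
    have c2: "closedin ?T A2" by (rule cl) (use a in blast)+
    obtain U V where UV: "openin ?T U" "openin ?T V" "A1 \<subseteq> U" "A2 \<subseteq> V" "disjnt U V"
    proof -
      have "disjnt A1 A2" using a by (simp add: disjnt_def)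
      then show ?thesis using N c1 c2 that unfolding normal_space_def by blast
    qed
    have k1: "compactin ?T A1" using c1 C closedin_compact_space by blast
    have k2: "compactin ?T A2" using c2 C closedin_compact_space by blast
    obtain W1 where w1: "W1\<in>Op" "A1 \<subseteq> W1" "W1 \<subseteq> U" using gts_shrink[OF assms(1) k1 UV(1,3)] by blast
    obtain W2 where w2: "W2\<in>Op" "A2 \<subseteq> W2" "W2 \<subseteq> V" using gts_shrink[OF assms(1) k2 UV(2,4)] by blast
    have "W1 \<inter> W2 = {}" using w1(3) w2(3) UV(5) unfolding disjnt_def by blast
    then show "\<exists>W1\<in>Op. \<exists>W2\<in>Op. W1 \<inter> W2 = {} \<and> A1 \<subseteq> W1 \<and> A2 \<subseteq> W2"
      using w1 w2 by blast
  qed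
qed

end
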